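(* Suppose $L>L_f$ and let $(u_k)$ be generated by the IHT method with parameter $L$. Then: (1) if $\alpha>0$ or $b<+\infty$, the sequences $(u_k)$ and $(\nabla f(u_k))$ are bounded in $L^2(\Omega)$; (2) the sequence $(f(u_k)+g(u_k))$ is monotonically decreasing and convergent; (3) $\|u_{k+1}-u_k\|_{L^2(\Omega)}\to0$; (4) $\sum_{k=1}^\infty\|\chi_k-\chi_{k+1}\|_{L^1(\Omega)}<+\infty$; (5) there is a characteristic function $\chi$ of a measurable subset of $\Omega$ with $\chi_k\to\chi$ in $L^1(\Omega)$.
   Context: Let $\Omega\subset\mathbb R^n$ be a bounded open set with Lebesgue measure. Fix $\alpha\ge0$, $\beta>0$, $b\in(0,+\infty]$ and set $U_{ad}:=\{v\in L^2(\Omega): |v(x)|\le b\text{ a.e. in }\Omega\}$. For $t\in\mathbb R$ let $|t|_0:=0$ if $t=0$ and $|t|_0:=1$ if $t\ne0$; for measurable $u$ let $\|u\|_0:=\operatorname{meas}\{x\in\Omega:u(x)\ne0\}$. Define $g(u):=\frac\alpha2\|u\|_{L^2(\Omega)}^2+\beta\|u\|_0$. The function $f:L^2(\Omega)\to\mathbb R$ is weakly lower semicontinuous, bounded from below and Fréchet differentiable; $\nabla f(u)\in L^2(\Omega)$ is the Riesz representative of its derivative, and $\nabla f$ is Lipschitz continuous on $L^2(\Omega)$ with constant $L_f$. IHT method: given $L>0$ and $u_0\in U_{ad}$, for $k=0,1,\dots$ let $u_{k+1}$ be a global solution of $\min_{u\in U_{ad}} f(u_k)+\int_\Omega\nabla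 f(u_k)(u-u_k)\,dx+\frac L2\|u-u_k\|_{L^2(\Omega)}^2+g(u)$ (a solution exists). Let $\chi_k$ denote the characteristic function of $\{x\in\Omega:u_k(x)\ne0\}$. *)

theory Defs
  imports "HOL-Analysis.Analysis"
begin

text \<open>Elements of L2(Omega) are represented by Lebesgue-measurable, square-integrable
real functions on Omega (representatives of the a.e. classes).\<close>

definition L2 :: "'a::euclidean_space set \<Rightarrow> ('a \<Rightarrow> real) set" where
  "L2 \<Omega> = {u. u \<in> borel_measurable (lebesgue_on \<Omega>) \<and>
                  integrable (lebesgue_on \<Omega>) (\<lambda>x. (u x)\<^sup>2)}"

definition l2_inner :: "'a::euclidean_space set \<Rightarrow> ('a \<Rightarrow> real) \<Rightarrow> ('a \<Rightarrow> real) \<Rightarrow> real" where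
  "l2_inner \<Omega> u v = (\<integral>x. u x * v x \<partial>lebesgue_on \<Omega>)"

definition l2_norm :: "'a::euclidean_space set \<Rightarrow> ('a \<Rightarrow> real) \<Rightarrow> real" where
  "l2_norm \<Omega> u = sqrt (\<integral>x. (u x)\<^sup>2 \<partial>lebesgue_on \<Omega>)"

definition l1_norm :: "'a::euclidean_space set \<Rightarrow> ('a \<Rightarrow> real) \<Rightarrow> real" where
  "l1_norm \<Omega> u = (\<integral>x. \<bar>u x\<bar> \<partial>lebesgue_on \<Omega>)"

definition l0_norm :: "'a::euclidean_space set \<Rightarrow> ('a \<Rightarrow> real) \<Rightarrow> real" where
  "l0_norm \<Omega> u = measure (lebesgue_on \<Omega>) {x \<in> \<Omega>. u x \<noteq> 0}"

definition gfun :: "real \<Rightarrow> real \<Rightarrow> 'a::euclidean_space set \<Rightarrow> ('a \<Rightarrow> real) \<Rightarrow> real" where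
  "gfun \<alpha> \<beta> \<Omega> u = \<alpha> / 2 * (l2_norm \<Omega> u)\<^sup>2 + \<beta> * l0_norm \<Omega> u"

text \<open>Admissible set; b :: ereal allows b = +infinity.\<close>
definition Uad :: "'a::euclidean_space set \<Rightarrow> ereal \<Rightarrow> ('a \<Rightarrow> real) set" where
  "Uad \<Omega> b = {v \<in> L2 \<Omega>. AE x in lebesgue_on \<Omega>. ereal \<bar>v x\<bar> \<le> b}"

definition chi :: "('a \<Rightarrow> real) \<Rightarrow> ('a \<Rightarrow> real)" where
  "chi u = indicator {x. u x \<noteq> 0}"

definition weakly_converges ::
  "'a::euclidean_space set \<Rightarrow> (nat \<Rightarrow> 'a \<Rightarrow> real) \<Rightarrow> ('a \<Rightarrow> real) \<Rightarrow> bool" where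
  "weakly_converges \<Omega> U u \<longleftrightarrow>
     (\<forall>w \<in> L2 \<Omega>. (\<lambda>k. l2_inner \<Omega> (U k) w) \<longlonglongrightarrow> l2_inner \<Omega> u w)"

definition weakly_lsc :: "'a::euclidean_space set \<Rightarrow> (('a \<Rightarrow> real) \<Rightarrow> real) \<Rightarrow> bool" where
  "weakly_lsc \<Omega> f \<longleftrightarrow>
     (\<forall>U u. (\<forall>k. U k \<in> L2 \<Omega>) \<longrightarrow> u \<in> L2 \<Omega> \<longrightarrow> weakly_converges \<Omega> U u \<longrightarrow>
        ereal (f u) \<le> liminf (\<lambda>k. ereal (f (U k))))"

definition frechet_gradient ::
  "'a::euclidean_space set \<Rightarrow> (('a \<Rightarrow> real) \<Rightarrow> real) \<Rightarrow> (('a \<Rightarrow> real) \<Rightarrow> ('a \<Rightarrow> real)) \<Rightarrow> bool" where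
  "frechet_gradient \<Omega> f G \<longleftrightarrow>
     (\<forall>u \<in> L2 \<Omega>. G u \<in> L2 \<Omega> \<and>
        (\<forall>e>0. \<exists>d>0. \<forall>v \<in> L2 \<Omega>. l2_norm \<Omega> (\<lambda>x. v x - u x) < d \<longrightarrow>
           \<bar>f v - f u - l2_inner \<Omega> (G u) (\<lambda>x. v x - u x)\<bar> \<le> e * l2_norm \<Omega> (\<lambda>x. v x - u x)))"

definition iht_model ::
  "real \<Rightarrow> real \<Rightarrow> 'a::euclidean_space set \<Rightarrow> (('a \<Rightarrow> real) \<Rightarrow> real) \<Rightarrow> (('a \<Rightarrow> real) \<Rightarrow> ('a \<Rightarrow> real))
    \<Rightarrow> real \<Rightarrow> ('a \<Rightarrow> real) \<Rightarrow> ('a \<Rightarrow> real) \<Rightarrow> real" where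
  "iht_model \<alpha> \<beta> \<Omega> f G L uk u =
     f uk + l2_inner \<Omega> (G uk) (\<lambda>x. u x - uk x) + L / 2 * (l2_norm \<Omega> (\<lambda>x. u x - uk x))\<^sup>2
     + gfun \<alpha> \<beta> \<Omega> u"

end

theory Submission
  imports Defs
begin


locale dom =
  fixes \<Omega> :: "'a::euclidean_space set"
  assumes Om: "\<Omega> \<in> lmeasurable"
begin

abbreviation "M \<equiv> lebesgue_on \<Omega>"

sublocale fm: finite_measure M
  using Om finite_measure_lebesgue_on by blast

lemma L2_meas: "u \<in> L2 \<Omega> \<Longrightarrow> u \<in> borel_measurable M"
  by (simp add: L2_def)

lemma L2_int: "u \<in> L2 \<Omega> \<Longrightarrow> integrable M (\<lambda>x. (u x)\<^sup>2)"
  by (simp add: L2_def)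

lemma L2I: "u \<in> borel_measurable M \<Longrightarrow> integrable M (\<lambda>x. (u x)\<^sup>2) \<Longrightarrow> u \<in> L2 \<Omega>"
  by (simp add: L2_def)

lemma L2_bound:
  assumes "w \<in> L2 \<Omega>" "u \<in> borel_measurable M" "AE x in M. (u x)\<^sup>2 \<le> c * (w x)\<^sup>2"
  shows "u \<in> L2 \<Omega>"
proof (rule L2I[OF assms(2)])
  have "integrable M (\<lambda>x. c * (w x)\<^sup>2)" using L2_int[OF assms(1)] by simp
  then show "integrable M (\<lambda>x. (u x)\<^sup>2)"
  proof (rule Bochner_Integration.integrable_bound)
    show "(\<lambda>x. (u x)\<^sup>2) \<in> borel_measurable M" using assms(2) by (intro borel_measurable_power)
    show "AE x in M. norm ((u x)\<^sup>2) \<le> norm (c * (w x)\<^sup>2)"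
      using assms(3) by eventually_elim (use abs_ge_self in simp)
  qed
qed

lemma L2_prod_int:
  assumes "u \<in> L2 \<Omega>" "v \<in> L2 \<Omega>"
  shows "integrable M (\<lambda>x. u x * v x)"
proof -
  have "integrable M (\<lambda>x. (u x)\<^sup>2 + (v x)\<^sup>2)"
    using L2_int[OF assms(1)] L2_int[OF assms(2)] by simp
  then show ?thesis
  proof (rule Bochner_Integration.integrable_bound)
    show "(\<lambda>x. u x * v x) \<in> borel_measurable M" using assms by (intro borel_measurable_times L2_meas)
    show "AE x in M. norm (u x * v x) \<le> norm ((u x)\<^sup>2 + (v x)\<^sup>2)"
    proof (rule AE_I2)
      fix x
      have "2 * \<bar>u x * v x\<bar> \<le> (u x)\<^sup>2 + (v x)\<^sup>2"
        using sum_squares_bound[of "\<bar>u x\<bar>" "\<bar>v x\<bar>"] by (simp add: abs_mult)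
      then show "norm (u x * v x) \<le> norm ((u x)\<^sup>2 + (v x)\<^sup>2)" by simp
    qed
  qed
qed

lemma L2_add:
  assumes "u \<in> L2 \<Omega>" "v \<in> L2 \<Omega>"
  shows "(\<lambda>x. u x + v x) \<in> L2 \<Omega>"
proof (rule L2I)
  show "(\<lambda>x. u x + v x) \<in> borel_measurable M" using assms by (intro borel_measurable_add L2_meas)
  have "integrable M (\<lambda>x. (u x)\<^sup>2 + 2 * (u x * v x) + (v x)\<^sup>2)"
    using L2_int[OF assms(1)] L2_int[OF assms(2)] L2_prod_int[OF assms] by simp
  then show "integrable M (\<lambda>x. (u x + v x)\<^sup>2)"
    by (rule back_subst[where P="integrable M"]) (simp add: fun_eq_iff power2_sum)
qed

lemma L2_scale:
  assumes "u \<in> L2 \<Omega>"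
  shows "(\<lambda>x. c * u x) \<in> L2 \<Omega>"
proof (rule L2I)
  show "(\<lambda>x. c * u x) \<in> borel_measurable M" using assms by (intro borel_measurable_times borel_measurable_const L2_meas)
  show "integrable M (\<lambda>x. (c * u x)\<^sup>2)"
    using L2_int[OF assms] by (simp add: power_mult_distrib)
qed

lemma L2_diff:
  assumes "u \<in> L2 \<Omega>" "v \<in> L2 \<Omega>"
  shows "(\<lambda>x. u x - v x) \<in> L2 \<Omega>"
  using L2_add[OF assms(1) L2_scale[OF assms(2), of "-1"]] by simp

lemma L2_lin:
  assumes "u \<in> L2 \<Omega>" "v \<in> L2 \<Omega>"
  shows "(\<lambda>x. u x + t * v x) \<in> L2 \<Omega>"
  using L2_add[OF assms(1) L2_scale[OF assms(2)]] by simp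

lemma L2_zero: "(\<lambda>x. 0) \<in> L2 \<Omega>"
  by (rule L2I) auto

lemma L2_const: "(\<lambda>x. c) \<in> L2 \<Omega>"
  by (rule L2I) auto

lemma sq_int_nonneg: "0 \<le> (\<integral>x. (u x :: real)\<^sup>2 \<partial>M)"
  by (rule Bochner_Integration.integral_nonneg) simp

lemma l2_norm_nonneg: "0 \<le> l2_norm \<Omega> u"
  by (simp add: l2_norm_def)

lemma l2_norm_sq: "(l2_norm \<Omega> u)\<^sup>2 = (\<integral>x. (u x)\<^sup>2 \<partial>M)"
  by (simp add: l2_norm_def sq_int_nonneg)

lemma expand:
  assumes "u \<in> L2 \<Omega>" "v \<in> L2 \<Omega>"
  shows "(\<integral>x. (t * u x + v x)\<^sup>2 \<partial>M) = t\<^sup>2 * (\<integral>x. (u x)\<^sup>2 \<partial>M) + 2 * t * l2_inner \<Omega> u v + (\<integral>x. (v x)\<^sup>2 \<partial>M)"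
proof -
  have "(\<lambda>x. (t * u x + v x)\<^sup>2) = (\<lambda>x. t\<^sup>2 * (u x)\<^sup>2 + (2 * t) * (u x * v x) + (v x)\<^sup>2)"
    by (auto simp: power2_sum power_mult_distrib algebra_simps)
  then show ?thesis
    using L2_int[OF assms(1)] L2_int[OF assms(2)] L2_prod_int[OF assms]
    by (simp add: l2_inner_def)
qed

lemma CS:
  assumes "u \<in> L2 \<Omega>" "v \<in> L2 \<Omega>"
  shows "\<bar>l2_inner \<Omega> u v\<bar> \<le> l2_norm \<Omega> u * l2_norm \<Omega> v"
proof -
  define A where "A = (\<integral>x. (u x)\<^sup>2 \<partial>M)"
  define B where "B = (\<integral>x. (v x)\<^sup>2 \<partial>M)"
  define C where "C = l2_inner \<Omega> u v"
  have A0: "A \<ge> 0" and B0: "B \<ge> 0" by (auto simp: A_def B_def sq_int_nonneg)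
  have q: "0 \<le> t\<^sup>2 * A + 2 * t * C + B" for t
    using expand[OF assms, of t] sq_int_nonneg[of "\<lambda>x. t * u x + v x"]
    by (simp add: A_def B_def C_def)
  have "C\<^sup>2 \<le> A * B"
  proof (cases "A = 0")
    case True
    have "C = 0"
    proof (rule ccontr)
      assume "C \<noteq> 0"
      have "0 \<le> 2 * (-(B+1)/(2*C)) * C + B" using q[of "-(B+1)/(2*C)"] True by simp
      also have "\<dots> = -1" using \<open>C \<noteq> 0\<close> by (simp add: field_simps)
      finally show False by simp
    qed
    then show ?thesis using True by simp
  next
    case False
    then have Ap: "A > 0" using A0 by simp
    have "0 \<le> (-C/A)\<^sup>2 * A + 2 * (-C/A) * C + B" by (rule q)
    also have "\<dots> = B - C\<^sup>2 / A" using Ap by (simp add: field_simps power2_eq_square)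
    finally show ?thesis using Ap by (simp add: field_simps)
  qed
  then have "sqrt (C\<^sup>2) \<le> sqrt (A * B)" by (rule real_sqrt_le_mono)
  then show ?thesis
    by (simp add: C_def l2_norm_def A_def B_def real_sqrt_mult)
qed

lemma minkowski:
  assumes "u \<in> L2 \<Omega>" "v \<in> L2 \<Omega>"
  shows "l2_norm \<Omega> (\<lambda>x. u x + v x) \<le> l2_norm \<Omega> u + l2_norm \<Omega> v"
proof -
  have "(l2_norm \<Omega> (\<lambda>x. u x + v x))\<^sup>2 = (l2_norm \<Omega> u)\<^sup>2 + 2 * l2_inner \<Omega> u v + (l2_norm \<Omega> v)\<^sup>2"
    using expand[OF assms, of 1] by (simp add: l2_norm_sq)
  also have "\<dots> \<le> (l2_norm \<Omega> u)\<^sup>2 + 2 * (l2_norm \<Omega> u * l2_norm \<Omega> v) + (l2_norm \<Omega> v)\<^sup>2"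
    using CS[OF assms] by simp
  also have "\<dots> = (l2_norm \<Omega> u + l2_norm \<Omega> v)\<^sup>2" by (simp add: power2_sum)
  finally show ?thesis
    using l2_norm_nonneg[of u] l2_norm_nonneg[of v] l2_norm_nonneg[of "\<lambda>x. u x + v x"]
    by (meson add_nonneg_nonneg power2_le_imp_le)
qed

lemma l2_norm_scale: "l2_norm \<Omega> (\<lambda>x. c * u x) = \<bar>c\<bar> * l2_norm \<Omega> u"
  by (simp add: l2_norm_def power_mult_distrib real_sqrt_mult)

lemma l2_inner_scale: "l2_inner \<Omega> g (\<lambda>x. c * u x) = c * l2_inner \<Omega> g u"
  by (simp add: l2_inner_def mult.left_commute)

lemma l2_inner_diff:
  assumes "g \<in> L2 \<Omega>" "h \<in> L2 \<Omega>" "d \<in> L2 \<Omega>"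
  shows "l2_inner \<Omega> (\<lambda>x. g x - h x) d = l2_inner \<Omega> g d - l2_inner \<Omega> h d"
  using L2_prod_int[OF assms(1,3)] L2_prod_int[OF assms(2,3)]
  by (simp add: l2_inner_def left_diff_distrib)


end

context dom begin

lemma deriv_line:
  assumes fg: "frechet_gradient \<Omega> f G" and u: "u \<in> L2 \<Omega>" and d: "d \<in> L2 \<Omega>"
  shows "((\<lambda>t. f (\<lambda>x. u x + t * d x)) has_real_derivative
            l2_inner \<Omega> (G (\<lambda>x. u x + t * d x)) d) (at t)"
proof -
  define w where "w s = (\<lambda>x. u x + s * d x)" for s
  define N where "N = l2_norm \<Omega> d"
  define D where "D = l2_inner \<Omega> (G (w t)) d"
  have N0: "N \<ge> 0" by (simp add: N_def l2_norm_nonneg)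
  have wL2: "w s \<in> L2 \<Omega>" for s unfolding w_def using L2_lin[OF u d] .
  have wdiff: "(\<lambda>x. w s x - w t x) = (\<lambda>x. (s - t) * d x)" for s
    by (auto simp: w_def algebra_simps)
  have "((\<lambda>s. (f (w s) - f (w t)) / (s - t)) \<longlongrightarrow> D) (at t)"
    unfolding LIM_eq
  proof (intro allI impI)
    fix r :: real assume r: "r > 0"
    define e where "e = r / (2 * (N + 1))"
    have e: "e > 0" using r N0 by (simp add: e_def)
    obtain \<delta> where \<delta>: "\<delta> > 0" and H: "\<And>v. v \<in> L2 \<Omega> \<Longrightarrow> l2_norm \<Omega> (\<lambda>x. v x - w t x) < \<delta> \<Longrightarrow>
        \<bar>f v - f (w t) - l2_inner \<Omega> (G (w t)) (\<lambda>x. v x - w t x)\<bar> \<le> e * l2_norm \<Omega> (\<lambda>x. v x - w t x)"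
      using fg wL2[of t] e unfolding frechet_gradient_def by meson
    show "\<exists>s>0. \<forall>x. x \<noteq> t \<and> norm (x - t) < s \<longrightarrow> norm ((f (w x) - f (w t)) / (x - t) - D) < r"
    proof (intro exI[of _ "\<delta> / (N + 1)"] conjI allI impI)
      show "\<delta> / (N + 1) > 0" using \<delta> N0 by simp
      fix x assume x: "x \<noteq> t \<and> norm (x - t) < \<delta> / (N + 1)"
      have nrm: "l2_norm \<Omega> (\<lambda>y. w x y - w t y) = \<bar>x - t\<bar> * N"
        by (simp add: wdiff l2_norm_scale N_def)
      have inn: "l2_inner \<Omega> (G (w t)) (\<lambda>y. w x y - w t y) = (x - t) * D"
        by (simp add: wdiff l2_inner_scale D_def)
      have "\<bar>x - t\<bar> * N \<le> \<bar>x - t\<bar> * (N + 1)" by (intro mult_left_mono) auto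
      also have "\<dots> < \<delta>" using x N0 by (simp add: field_simps)
      finally have "\<bar>f (w x) - f (w t) - (x - t) * D\<bar> \<le> e * (\<bar>x - t\<bar> * N)"
        using H[OF wL2[of x]] nrm inn by simp
      then have "\<bar>(f (w x) - f (w t) - (x - t) * D) / (x - t)\<bar> \<le> e * N"
        using x by (simp add: abs_divide field_simps)
      moreover have "(f (w x) - f (w t) - (x - t) * D) / (x - t) = (f (w x) - f (w t)) / (x - t) - D"
        using x by (simp add: field_simps)
      moreover have "e * N < r"
      proof -
        have "e * N = r * N / (2 * (N + 1))" by (simp add: e_def)
        also have "\<dots> < r"
        proof -
          have den: "0 < 2 * (N + 1)" using N0 by simp
          have "r * N < r * (2 * (N + 1))" using r N0 by (intro mult_strict_left_mono) auto
          then show ?thesis unfolding pos_divide_less_eq[OF den] .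
        qed
        finally show ?thesis .
      qed
      ultimately show "norm ((f (w x) - f (w t)) / (x - t) - D) < r" by simp
    qed
  qed
  then show ?thesis
    by (simp add: has_field_derivative_iff w_def D_def)
qed

lemma descent:
  assumes fg: "frechet_gradient \<Omega> f G" and u: "u \<in> L2 \<Omega>" and v: "v \<in> L2 \<Omega>"
    and Lf: "Lf \<ge> 0"
    and lip: "\<And>v w. v \<in> L2 \<Omega> \<Longrightarrow> w \<in> L2 \<Omega> \<Longrightarrow>
        l2_norm \<Omega> (\<lambda>x. G v x - G w x) \<le> Lf * l2_norm \<Omega> (\<lambda>x. v x - w x)"
  shows "f v \<le> f u + l2_inner \<Omega> (G u) (\<lambda>x. v x - u x) + Lf / 2 * (l2_norm \<Omega> (\<lambda>x. v x - u x))\<^sup>2"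
proof -
  define d where "d = (\<lambda>x. v x - u x)"
  have d: "d \<in> L2 \<Omega>" unfolding d_def using L2_diff[OF v u] .
  define w where "w s = (\<lambda>x. u x + s * d x)" for s
  define N where "N = l2_norm \<Omega> d"
  define D0 where "D0 = l2_inner \<Omega> (G u) d"
  have N0: "N \<ge> 0" by (simp add: N_def l2_norm_nonneg)
  have wL2: "w s \<in> L2 \<Omega>" for s unfolding w_def using L2_lin[OF u d] .
  define \<psi> where "\<psi> t = f (w t) - t * D0 - Lf / 2 * t\<^sup>2 * N\<^sup>2" for t
  have dl0: "((\<lambda>t. f (\<lambda>x. u x + t * d x)) has_real_derivative l2_inner \<Omega> (G (\<lambda>x. u x + t * d x)) d) (at t)" for t
    by (rule deriv_line[OF fg u d])
  have wfun: "w = (\<lambda>t. (\<lambda>x. u x + t * d x))" by (simp add: w_def fun_eq_iff)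
  have dl: "((\<lambda>t. f (w t)) has_real_derivative l2_inner \<Omega> (G (w t)) d) (at t)" for t
    unfolding wfun by (rule dl0)
  have dpsi: "(\<psi> has_real_derivative (l2_inner \<Omega> (G (w t)) d - D0 - Lf / 2 * (2 * t) * N\<^sup>2)) (at t)" for t
  proof -
    have d2: "((\<lambda>s. s * D0) has_real_derivative D0) (at t)" by (auto intro!: derivative_eq_intros)
    have d3: "((\<lambda>s. Lf / 2 * s\<^sup>2 * N\<^sup>2) has_real_derivative Lf / 2 * (2 * t) * N\<^sup>2) (at t)"
      by (auto intro!: derivative_eq_intros)
    show ?thesis unfolding \<psi>_def using DERIV_diff[OF DERIV_diff[OF dl d2] d3] .
  qed
  have "\<psi> 0 \<ge> \<psi> 1"
  proof (rule DERIV_nonpos_imp_decreasing_open[of 0 1 \<psi>])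
    show "continuous_on {0..1} \<psi>"
      using dpsi by (meson DERIV_isCont continuous_at_imp_continuous_on)
    fix t :: real assume t: "0 < t" "t < 1"
    have GL: "G z \<in> L2 \<Omega>" if "z \<in> L2 \<Omega>" for z using fg that by (simp add: frechet_gradient_def)
    have "l2_inner \<Omega> (G (w t)) d - D0 = l2_inner \<Omega> (\<lambda>x. G (w t) x - G u x) d"
      unfolding D0_def using l2_inner_diff[OF GL[OF wL2] GL[OF u] d] by simp
    also have "\<dots> \<le> l2_norm \<Omega> (\<lambda>x. G (w t) x - G u x) * N"
      using order_trans[OF abs_ge_self CS[OF L2_diff[OF GL[OF wL2[of t]] GL[OF u]] d]] N_def by simp
    also have "\<dots> \<le> Lf * l2_norm \<Omega> (\<lambda>x. w t x - u x) * N"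
      using lip[OF wL2 u] N0 by (simp add: mult_right_mono)
    also have "(\<lambda>x. w t x - u x) = (\<lambda>x. t * d x)" by (simp add: w_def)
    also have "Lf * l2_norm \<Omega> (\<lambda>x. t * d x) * N = Lf / 2 * (2 * t) * N\<^sup>2"
      using t by (simp add: l2_norm_scale N_def power2_eq_square)
    finally have le: "l2_inner \<Omega> (G (w t)) d - D0 \<le> Lf / 2 * (2 * t) * N\<^sup>2" .
    show "\<exists>y. (\<psi> has_real_derivative y) (at t) \<and> y \<le> 0"
      using dpsi[of t] le by (intro exI[of _ "l2_inner \<Omega> (G (w t)) d - D0 - Lf / 2 * (2 * t) * N\<^sup>2"]) auto
  qed simp
  moreover have "w 0 = u" "w 1 = v" by (auto simp: w_def d_def)
  ultimately show ?thesis
    by (simp add: \<psi>_def d_def[symmetric] N_def D0_def)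
qed

end


lemma scalar_key:
  fixes g a t L \<alpha> \<beta> :: real
  assumes P: "L + \<alpha> > 0" and t: "t \<noteq> 0"
    and h0: "g * (t - a) + L/2 * (t - a)\<^sup>2 + \<alpha>/2 * t\<^sup>2 + \<beta> \<le> g * (0 - a) + L/2 * (0 - a)\<^sup>2 + \<alpha>/2 * 0\<^sup>2 + 0"
    and h2: "g * (t - a) + L/2 * (t - a)\<^sup>2 + \<alpha>/2 * t\<^sup>2 + \<beta> \<le> g * (2*t - a) + L/2 * (2*t - a)\<^sup>2 + \<alpha>/2 * (2*t)\<^sup>2 + \<beta>"
  shows "\<beta> / (L + \<alpha>) \<le> t\<^sup>2"
proof -
  define P where "P = L + \<alpha>"
  define c where "c = g - L * a"
  have e0: "(L + \<alpha>)/2 * t\<^sup>2 + c * t + \<beta> \<le> 0"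
    using h0 by (simp add: c_def power2_eq_square field_simps)
  have e2: "- (c * t) \<le> 3 * (L + \<alpha>) / 2 * t\<^sup>2"
    using h2 by (simp add: c_def power2_eq_square field_simps)
  have "\<beta> \<le> (L + \<alpha>) * t\<^sup>2" using e0 e2 by linarith
  then show ?thesis using P by (simp add: divide_le_eq mult.commute)
qed

lemma delta_ex:
  fixes b :: ereal and c :: real
  assumes "b > 0" "c > 0"
  shows "\<exists>\<delta>>0. \<forall>t::real. (b < ereal \<bar>2 * t\<bar> \<or> c \<le> t\<^sup>2) \<longrightarrow> \<delta> \<le> t\<^sup>2"
proof (cases b)
  case (real r)
  then have r: "r > 0" using assms by simp
  show ?thesis
  proof (intro exI[of _ "min ((r/2)\<^sup>2) c"] conjI allI impI)
    show "min ((r/2)\<^sup>2) c > 0" using r assms by simp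
    fix t :: real assume H: "b < ereal \<bar>2 * t\<bar> \<or> c \<le> t\<^sup>2"
    show "min ((r/2)\<^sup>2) c \<le> t\<^sup>2"
    proof (cases "c \<le> t\<^sup>2")
      case True then show ?thesis by simp
    next
      case False
      then have "r < \<bar>2 * t\<bar>" using H real by simp
      then have "r/2 < \<bar>t\<bar>" by simp
      then have "(r/2)\<^sup>2 \<le> \<bar>t\<bar>\<^sup>2" using r by (intro power_mono) auto
      then show ?thesis by simp
    qed
  qed
next
  case PInf
  then show ?thesis using assms by (intro exI[of _ c]) auto
next
  case MInf
  then show ?thesis using assms by simp
qed

locale iht = dom +
  fixes \<alpha> \<beta> L Lf :: real and b :: ereal
    and f :: "('a \<Rightarrow> real) \<Rightarrow> real"
    and gradf :: "('a \<Rightarrow> real) \<Rightarrow> ('a \<Rightarrow> real)"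
    and u :: "nat \<Rightarrow> 'a \<Rightarrow> real"
  assumes \<alpha>: "\<alpha> \<ge> 0" and \<beta>: "\<beta> > 0" and b: "b > 0"
    and f_below: "\<exists>c. \<forall>v \<in> L2 \<Omega>. c \<le> f v"
    and f_grad: "frechet_gradient \<Omega> f gradf"
    and Lf: "Lf \<ge> 0"
    and grad_lip: "\<And>v w. v \<in> L2 \<Omega> \<Longrightarrow> w \<in> L2 \<Omega> \<Longrightarrow>
        l2_norm \<Omega> (\<lambda>x. gradf v x - gradf w x) \<le> Lf * l2_norm \<Omega> (\<lambda>x. v x - w x)"
    and L: "L > Lf"
    and u0: "u 0 \<in> Uad \<Omega> b"
    and iht: "\<And>k. u (Suc k) \<in> Uad \<Omega> b \<and>
        (\<forall>v \<in> Uad \<Omega> b. iht_model \<alpha> \<beta> \<Omega> f gradf L (u k) (u (Suc k))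
                          \<le> iht_model \<alpha> \<beta> \<Omega> f gradf L (u k) v)"
begin

lemma uUad: "u k \<in> Uad \<Omega> b"
  by (cases k) (use u0 iht in auto)

lemma uL2: "u k \<in> L2 \<Omega>"
  using uUad by (simp add: Uad_def)

lemma GL2: "v \<in> L2 \<Omega> \<Longrightarrow> gradf v \<in> L2 \<Omega>"
  using f_grad by (simp add: frechet_gradient_def)

definition F where "F k = f (u k) + gfun \<alpha> \<beta> \<Omega> (u k)"

definition D where "D k = (l2_norm \<Omega> (\<lambda>x. u (Suc k) x - u k x))\<^sup>2"

lemma gfun_nonneg: "0 \<le> gfun \<alpha> \<beta> \<Omega> v"
  using \<alpha> \<beta> by (simp add: gfun_def l0_norm_def)

lemma decrease: "F (Suc k) \<le> F k - (L - Lf) / 2 * D k"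
proof -
  define I where "I = l2_inner \<Omega> (gradf (u k)) (\<lambda>x. u (Suc k) x - u k x)"
  define N2 where "N2 = (l2_norm \<Omega> (\<lambda>x. u (Suc k) x - u k x))\<^sup>2"
  have m: "iht_model \<alpha> \<beta> \<Omega> f gradf L (u k) (u (Suc k)) \<le> iht_model \<alpha> \<beta> \<Omega> f gradf L (u k) (u k)"
    using iht[of k] uUad[of k] by blast
  have self: "iht_model \<alpha> \<beta> \<Omega> f gradf L (u k) (u k) = F k"
    by (simp add: iht_model_def l2_inner_def l2_norm_def F_def)
  have mn: "iht_model \<alpha> \<beta> \<Omega> f gradf L (u k) (u (Suc k)) = f (u k) + I + L / 2 * N2 + gfun \<alpha> \<beta> \<Omega> (u (Suc k))"
    by (simp add: iht_model_def I_def N2_def)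
  have d: "f (u (Suc k)) \<le> f (u k) + I + Lf / 2 * N2"
    unfolding I_def N2_def by (rule descent[OF f_grad uL2 uL2 Lf grad_lip])
  have eq: "(L - Lf) / 2 * N2 = L / 2 * N2 - Lf / 2 * N2" by (simp add: field_simps)
  show ?thesis using m self mn d eq unfolding F_def D_def N2_def[symmetric] by linarith
qed

lemma D_nonneg: "0 \<le> D k" by (simp add: D_def)

lemma F_dec: "decseq F"
proof (rule decseq_SucI)
  fix k
  have "0 \<le> (L - Lf) / 2 * D k" using D_nonneg[of k] L by simp
  then show "F (Suc k) \<le> F k" using decrease[of k] by linarith
qed

lemma F_below: "\<exists>c. \<forall>k. c \<le> F k"
proof -
  obtain c where c: "\<forall>v \<in> L2 \<Omega>. c \<le> f v" using f_below by blast
  have "c \<le> F k" for k using c uL2[of k] gfun_nonneg[of "u k"] by (force simp: F_def)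
  then show ?thesis by blast
qed

lemma F_conv: "\<exists>l. F \<longlonglongrightarrow> l"
proof -
  obtain c where c: "\<forall>k. c \<le> F k" using F_below by blast
  obtain l where "F \<longlonglongrightarrow> l" using decseq_convergent[OF F_dec c] by blast
  then show ?thesis by blast
qed

lemma D_summable: "summable D"
proof -
  obtain l where l: "F \<longlonglongrightarrow> l" using F_conv by blast
  have s: "summable (\<lambda>k. 2 / (L - Lf) * (F k - F (Suc k)))"
    using telescope_summable'[OF l] by (rule summable_mult)
  show ?thesis
  proof (rule summable_comparison_test[OF _ s])
    show "\<exists>N. \<forall>n\<ge>N. norm (D n) \<le> 2 / (L - Lf) * (F n - F (Suc n))"
    proof (intro exI allI impI)
      fix n :: nat
      have p: "L - Lf > 0" using L by simp
      have "D n = 2 / (L - Lf) * ((L - Lf) / 2 * D n)" using p by simp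
      also have "\<dots> \<le> 2 / (L - Lf) * (F n - F (Suc n))"
        using decrease[of n] p by (intro mult_left_mono) auto
      finally show "norm (D n) \<le> 2 / (L - Lf) * (F n - F (Suc n))" using D_nonneg[of n] by simp
    qed
  qed
qed

lemma step_to_zero: "(\<lambda>k. l2_norm \<Omega> (\<lambda>x. u (Suc k) x - u k x)) \<longlonglongrightarrow> 0"
proof -
  have "D \<longlonglongrightarrow> 0" using D_summable by (rule summable_LIMSEQ_zero)
  then have "(\<lambda>k. sqrt (D k)) \<longlonglongrightarrow> sqrt 0" by (rule tendsto_real_sqrt)
  moreover have "sqrt (D k) = l2_norm \<Omega> (\<lambda>x. u (Suc k) x - u k x)" for k
    by (simp add: D_def l2_norm_nonneg)
  ultimately show ?thesis by simp
qed

end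


context iht begin

definition h where
  "h k x s = gradf (u k) x * (s - u k x) + L / 2 * (s - u k x)\<^sup>2 + \<alpha> / 2 * s\<^sup>2
     + \<beta> * (if s = 0 then 0 else 1)"

lemma h_meas:
  assumes z: "z \<in> borel_measurable M"
  shows "(\<lambda>x. h k x (z x)) \<in> borel_measurable M"
proof -
  have [measurable]: "z \<in> borel_measurable M" "u k \<in> borel_measurable M" "gradf (u k) \<in> borel_measurable M"
    using z L2_meas[OF uL2] L2_meas[OF GL2[OF uL2]] by auto
  show ?thesis unfolding h_def by measurable
qed

lemma ind_int:
  assumes z: "z \<in> borel_measurable M"
  shows "integrable M (\<lambda>x. if z x = 0 then 0 else 1 :: real)"
    and "(\<integral>x. (if z x = 0 then 0 else 1 :: real) \<partial>M) = l0_norm \<Omega> z"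
proof -
  have [measurable]: "z \<in> borel_measurable M" using z .
  show "integrable M (\<lambda>x. if z x = 0 then 0 else 1 :: real)"
    by (rule fm.integrable_const_bound[where B=1]) auto
  have "(\<lambda>x. if z x = 0 then 0 else 1 :: real) = indicator {x. z x \<noteq> 0}"
    by (auto simp: fun_eq_iff indicator_def)
  moreover have "{x. z x \<noteq> 0} \<inter> space M = {x \<in> \<Omega>. z x \<noteq> 0}" by auto
  ultimately show "(\<integral>x. (if z x = 0 then 0 else 1 :: real) \<partial>M) = l0_norm \<Omega> z"
    by (simp add: l0_norm_def)
qed

lemma model_rep:
  assumes v: "v \<in> L2 \<Omega>"
  shows "integrable M (\<lambda>x. h k x (v x))"
    and "iht_model \<alpha> \<beta> \<Omega> f gradf L (u k) v = f (u k) + (\<integral>x. h k x (v x) \<partial>M)"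
proof -
  have dv: "(\<lambda>x. v x - u k x) \<in> L2 \<Omega>" using L2_diff[OF v uL2] .
  have i1: "integrable M (\<lambda>x. gradf (u k) x * (v x - u k x))"
    using L2_prod_int[OF GL2[OF uL2] dv] .
  have i2: "integrable M (\<lambda>x. (v x - u k x)\<^sup>2)" using L2_int[OF dv] .
  have i3: "integrable M (\<lambda>x. (v x)\<^sup>2)" using L2_int[OF v] .
  have i4: "integrable M (\<lambda>x. if v x = 0 then 0 else 1 :: real)"
    and e4: "(\<integral>x. (if v x = 0 then 0 else 1 :: real) \<partial>M) = l0_norm \<Omega> v"
    using ind_int[OF L2_meas[OF v]] by auto
  have hv: "(\<lambda>x. h k x (v x)) = (\<lambda>x. gradf (u k) x * (v x - u k x) + L / 2 * (v x - u k x)\<^sup>2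
     + \<alpha> / 2 * (v x)\<^sup>2 + \<beta> * (if v x = 0 then 0 else 1))"
    by (simp add: h_def fun_eq_iff)
  show "integrable M (\<lambda>x. h k x (v x))"
    unfolding hv using i1 i2 i3 i4 by simp
  have "(\<integral>x. h k x (v x) \<partial>M) = (\<integral>x. gradf (u k) x * (v x - u k x) \<partial>M) + L / 2 * (\<integral>x. (v x - u k x)\<^sup>2 \<partial>M)
     + \<alpha> / 2 * (\<integral>x. (v x)\<^sup>2 \<partial>M) + \<beta> * (\<integral>x. (if v x = 0 then 0 else 1 :: real) \<partial>M)"
    unfolding hv using i1 i2 i3 i4 by simp
  then show "iht_model \<alpha> \<beta> \<Omega> f gradf L (u k) v = f (u k) + (\<integral>x. h k x (v x) \<partial>M)"
    by (simp add: iht_model_def gfun_def l2_inner_def l2_norm_sq e4)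
qed

lemma L2_bound2:
  assumes "integrable M g" "z \<in> borel_measurable M" "AE x in M. (z x)\<^sup>2 \<le> g x"
  shows "z \<in> L2 \<Omega>"
proof (rule L2I[OF assms(2)])
  show "integrable M (\<lambda>x. (z x)\<^sup>2)"
  proof (rule Bochner_Integration.integrable_bound[OF assms(1)])
    show "(\<lambda>x. (z x)\<^sup>2) \<in> borel_measurable M" using assms(2) by (intro borel_measurable_power)
    show "AE x in M. norm ((z x)\<^sup>2) \<le> norm (g x)"
      using assms(3) by eventually_elim (use abs_ge_self in simp)
  qed
qed

lemma pw_opt:
  assumes w: "w \<in> L2 \<Omega>"
    and vU: "(\<lambda>x. if h k x (w x) < h k x (u (Suc k) x) then w x else u (Suc k) x) \<in> Uad \<Omega> b"
  shows "AE x in M. h k x (u (Suc k) x) \<le> h k x (w x)"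
proof -
  define n where "n = u (Suc k)"
  define v where "v = (\<lambda>x. if h k x (w x) < h k x (n x) then w x else n x)"
  have vL2': "(\<lambda>x. if h k x (w x) < h k x (u (Suc k) x) then w x else u (Suc k) x) \<in> L2 \<Omega>"
    using vU by (simp add: Uad_def)
  have vL2: "v \<in> L2 \<Omega>" unfolding v_def n_def by (rule vL2')
  have nL2: "n \<in> L2 \<Omega>" using uL2 by (simp add: n_def)
  have "iht_model \<alpha> \<beta> \<Omega> f gradf L (u k) n \<le> iht_model \<alpha> \<beta> \<Omega> f gradf L (u k) v"
    using iht[of k] vU unfolding v_def n_def by blast
  then have le: "(\<integral>x. h k x (n x) \<partial>M) \<le> (\<integral>x. h k x (v x) \<partial>M)"
    using model_rep(2)[OF nL2, of k] model_rep(2)[OF vL2, of k] by simp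
  have hv: "h k x (v x) = min (h k x (n x)) (h k x (w x))" for x
    by (auto simp: v_def min_def)
  define \<phi> where "\<phi> x = h k x (n x) - h k x (v x)" for x
  have phi_int: "integrable M \<phi>"
    unfolding \<phi>_def using model_rep(1)[OF nL2, of k] model_rep(1)[OF vL2, of k] by simp
  have phi_nn: "AE x in M. 0 \<le> \<phi> x" by (simp add: \<phi>_def hv)
  have "(\<integral>x. \<phi> x \<partial>M) = (\<integral>x. h k x (n x) \<partial>M) - (\<integral>x. h k x (v x) \<partial>M)"
    unfolding \<phi>_def using model_rep(1)[OF nL2, of k] model_rep(1)[OF vL2, of k] by simp
  moreover have "0 \<le> (\<integral>x. \<phi> x \<partial>M)" using phi_nn by (rule integral_nonneg_AE)
  ultimately have "(\<integral>x. \<phi> x \<partial>M) = 0" using le by linarith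
  then have "AE x in M. \<phi> x = 0" using integral_nonneg_eq_0_iff_AE[OF phi_int phi_nn] by simp
  then show ?thesis
    by eventually_elim (auto simp: \<phi>_def hv n_def min_def split: if_splits)
qed

lemma support_gap:
  "\<exists>\<delta>>0. \<forall>k. AE x in M. u (Suc k) x \<noteq> 0 \<longrightarrow> \<delta> \<le> (u (Suc k) x)\<^sup>2"
proof -
  have P: "L + \<alpha> > 0" using L Lf \<alpha> by simp
  obtain \<delta> where \<delta>: "\<delta> > 0" and H: "\<And>t::real. (b < ereal \<bar>2 * t\<bar> \<or> \<beta> / (L + \<alpha>) \<le> t\<^sup>2) \<Longrightarrow> \<delta> \<le> t\<^sup>2"
    using delta_ex[OF b, of "\<beta> / (L + \<alpha>)"] P \<beta> by auto
  have "AE x in M. u (Suc k) x \<noteq> 0 \<longrightarrow> \<delta> \<le> (u (Suc k) x)\<^sup>2" for k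
  proof -
    define n where "n = u (Suc k)"
    have nL2: "n \<in> L2 \<Omega>" using uL2 by (simp add: n_def)
    have nU: "AE x in M. ereal \<bar>n x\<bar> \<le> b" using uUad[of "Suc k"] by (simp add: Uad_def n_def)
    have [measurable]: "n \<in> borel_measurable M" using L2_meas[OF nL2] .
    have hm[measurable]: "(\<lambda>x. h k x (z x)) \<in> borel_measurable M" if "z \<in> borel_measurable M" for z
      using h_meas[OF that] .
    have w0: "(\<lambda>x. 0::real) \<in> L2 \<Omega>" by (rule L2_zero)
    have v0U: "(\<lambda>x. if h k x ((\<lambda>x. 0::real) x) < h k x (n x) then (\<lambda>x. 0::real) x else n x) \<in> Uad \<Omega> b"
    proof -
      have m: "(\<lambda>x. if h k x 0 < h k x (n x) then 0 else n x) \<in> borel_measurable M"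
        using hm[of "\<lambda>x. 0"] hm[of n] by measurable
      have "(\<lambda>x. if h k x 0 < h k x (n x) then 0 else n x) \<in> L2 \<Omega>"
        by (rule L2_bound[OF nL2 m, of 1]) auto
      moreover have "AE x in M. ereal \<bar>if h k x 0 < h k x (n x) then 0 else n x\<bar> \<le> b"
        using nU
      proof eventually_elim
        have b0: "ereal 0 \<le> b" using b by (simp add: zero_ereal_def[symmetric] less_imp_le)
        case (elim x) then show ?case using b0 by auto
      qed
      ultimately show ?thesis by (simp add: Uad_def)
    qed
    have A1: "AE x in M. h k x (n x) \<le> h k x 0"
      using pw_opt[OF w0 v0U[unfolded n_def]] by (simp add: n_def)
    define w2 where "w2 = (\<lambda>x. if ereal \<bar>2 * n x\<bar> \<le> b then 2 * n x else n x)"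
    have w2m[measurable]: "w2 \<in> borel_measurable M" unfolding w2_def by measurable
    have w2L2: "w2 \<in> L2 \<Omega>"
      by (rule L2_bound[OF nL2 w2m, of 4]) (auto simp: w2_def power_mult_distrib)
    have v2U: "(\<lambda>x. if h k x (w2 x) < h k x (n x) then w2 x else n x) \<in> Uad \<Omega> b"
    proof -
      have m: "(\<lambda>x. if h k x (w2 x) < h k x (n x) then w2 x else n x) \<in> borel_measurable M"
        using hm[of w2] hm[of n] by measurable
      have "(\<lambda>x. if h k x (w2 x) < h k x (n x) then w2 x else n x) \<in> L2 \<Omega>"
        by (rule L2_bound[OF nL2 m, of 4]) (auto simp: w2_def power_mult_distrib)
      moreover have "AE x in M. ereal \<bar>if h k x (w2 x) < h k x (n x) then w2 x else n x\<bar> \<le> b"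
        using nU by eventually_elim (auto simp: w2_def)
      ultimately show ?thesis by (simp add: Uad_def)
    qed
    have A2: "AE x in M. h k x (n x) \<le> h k x (w2 x)"
      using pw_opt[OF w2L2 v2U[unfolded n_def]] by (simp add: n_def)
    show ?thesis
      using A1 A2
    proof eventually_elim
      case (elim x)
      show ?case
      proof
        assume t: "u (Suc k) x \<noteq> 0"
        show "\<delta> \<le> (u (Suc k) x)\<^sup>2"
        proof (rule H)
          show "b < ereal \<bar>2 * u (Suc k) x\<bar> \<or> \<beta> / (L + \<alpha>) \<le> (u (Suc k) x)\<^sup>2"
          proof (cases "ereal \<bar>2 * n x\<bar> \<le> b")
            case True
            then have "w2 x = 2 * n x" by (simp add: w2_def)
            then have "\<beta> / (L + \<alpha>) \<le> (n x)\<^sup>2"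
              using scalar_key[OF P, of "n x" "gradf (u k) x" "u k x" \<beta>] elim t
              by (simp add: h_def n_def)
            then show ?thesis by (simp add: n_def)
          next
            case False
            then show ?thesis by (simp add: n_def not_le)
          qed
        qed
      qed
    qed
  qed
  then show ?thesis using \<delta> by blast
qed

end


context iht begin

definition T where "T j = {x \<in> \<Omega>. u j x \<noteq> 0}"

definition SD where "SD S A = (S - A) \<union> (A - S)"

lemma T_sets: "T j \<in> sets M"
proof -
  have [measurable]: "u j \<in> borel_measurable M" using L2_meas[OF uL2] .
  have "{x \<in> space M. u j x \<noteq> 0} \<in> sets M" by measurable
  then show ?thesis by (simp add: T_def)
qed

lemma chi_T: "x \<in> \<Omega> \<Longrightarrow> chi (u j) x = indicator (T j) x"
  by (simp add: chi_def T_def indicator_def)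

lemma l1_ind:
  assumes S: "S \<in> sets M" and A: "A \<in> sets M"
    and p: "\<And>x. x \<in> \<Omega> \<Longrightarrow> p x = indicator S x" and q: "\<And>x. x \<in> \<Omega> \<Longrightarrow> q x = indicator A x"
  shows "l1_norm \<Omega> (\<lambda>x. p x - q x) = measure M (SD S A)"
proof -
  have "l1_norm \<Omega> (\<lambda>x. p x - q x) = (\<integral>x. indicator (SD S A) x \<partial>M)"
    unfolding l1_norm_def
    by (rule Bochner_Integration.integral_cong) (auto simp: p q SD_def indicator_def)
  also have "\<dots> = measure M (SD S A \<inter> \<Omega>)" by simp
  also have "SD S A \<inter> \<Omega> = SD S A"
    using sets.sets_into_space[OF S] sets.sets_into_space[OF A] by (auto simp: SD_def)
  finally show ?thesis .
qed

lemma l1_ind2: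
  assumes S: "S \<in> sets M" and A: "A \<in> sets M"
    and p: "\<And>x. x \<in> \<Omega> \<Longrightarrow> p x = indicator S x"
  shows "l1_norm \<Omega> (\<lambda>x. p x - indicator A x) = measure M (SD S A)"
  using l1_ind[OF S A p, of "indicator A"] by simp

lemma l2_norm_neg: "l2_norm \<Omega> (\<lambda>x. - v x) = l2_norm \<Omega> v"
  by (simp add: l2_norm_def)

lemma SD_sets: "S \<in> sets M \<Longrightarrow> A \<in> sets M \<Longrightarrow> SD S A \<in> sets M"
  by (auto simp: SD_def)

definition m where "m j = measure M (SD (T (Suc j)) (T (Suc (Suc j))))"

lemma l1_m: "l1_norm \<Omega> (\<lambda>x. chi (u (Suc j)) x - chi (u (Suc (Suc j))) x) = m j"
  unfolding m_def by (rule l1_ind[OF T_sets T_sets chi_T chi_T])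

lemma m_summable: "summable m"
proof -
  obtain \<delta> where \<delta>: "\<delta> > 0" and gap: "\<And>k. AE x in M. u (Suc k) x \<noteq> 0 \<longrightarrow> \<delta> \<le> (u (Suc k) x)\<^sup>2"
    using support_gap by blast
  have mb: "m j \<le> (1 / \<delta>) * D (Suc j)" for j
  proof -
    define d where "d = (\<lambda>x. u (Suc (Suc j)) x - u (Suc j) x)"
    have dL2: "d \<in> L2 \<Omega>" unfolding d_def using L2_diff[OF uL2 uL2] .
    have "m j = (\<integral>x. indicator (SD (T (Suc j)) (T (Suc (Suc j)))) x \<partial>M)"
      using sets.sets_into_space[OF SD_sets[OF T_sets T_sets]] by (simp add: m_def Int_absorb2)
    also have "\<dots> \<le> (\<integral>x. (1 / \<delta>) * (d x)\<^sup>2 \<partial>M)"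
    proof (rule integral_mono_AE)
      show "integrable M (indicator (SD (T (Suc j)) (T (Suc (Suc j)))) :: _ \<Rightarrow> real)"
        using SD_sets[OF T_sets T_sets] by (intro integrable_real_indicator) (auto simp: less_top[symmetric] fm.emeasure_finite)
      show "integrable M (\<lambda>x. (1 / \<delta>) * (d x)\<^sup>2)" using L2_int[OF dL2] by simp
      show "AE x in M. indicator (SD (T (Suc j)) (T (Suc (Suc j)))) x \<le> (1 / \<delta>) * (d x)\<^sup>2"
        using gap[of j] gap[of "Suc j"]
      proof eventually_elim
        case (elim x)
        have q: "1 \<le> (1 / \<delta>) * (d x)\<^sup>2" if "\<delta> \<le> (d x)\<^sup>2"
          using that \<delta> by (simp add: field_simps)
        show ?case
          using elim q \<delta> by (auto simp: indicator_def SD_def T_def d_def)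
      qed
    qed
    also have "\<dots> = (1 / \<delta>) * D (Suc j)"
      by (simp add: D_def l2_norm_sq d_def)
    finally show ?thesis .
  qed
  have s: "summable (\<lambda>j. (1 / \<delta>) * D (Suc j))"
    using D_summable by (intro summable_mult) (simp add: summable_Suc_iff)
  show ?thesis
  proof (rule summable_comparison_test[OF _ s])
    show "\<exists>N. \<forall>n\<ge>N. norm (m n) \<le> 1 / \<delta> * D (Suc n)"
    proof (intro exI allI impI)
      fix n :: nat
      have "0 \<le> m n" by (simp add: m_def)
      then show "norm (m n) \<le> 1 / \<delta> * D (Suc n)" using mb[of n] by simp
    qed
  qed
qed

end

context iht begin

definition A where "A = {x \<in> \<Omega>. \<exists>N. \<forall>j\<ge>N. x \<in> T j}"

lemma A_sets: "A \<in> sets M"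
proof -
  have "A = (\<Union>N. \<Inter>j\<in>{N..}. T j)"
  proof
    show "A \<subseteq> (\<Union>N. \<Inter>j\<in>{N..}. T j)" unfolding A_def by blast
    show "(\<Union>N. \<Inter>j\<in>{N..}. T j) \<subseteq> A"
    proof
      fix x assume "x \<in> (\<Union>N. \<Inter>j\<in>{N..}. T j)"
      then obtain N where N: "\<forall>j\<ge>N. x \<in> T j" by auto
      then have "x \<in> \<Omega>" by (auto simp: T_def)
      then show "x \<in> A" using N unfolding A_def by blast
    qed
  qed
  also have "\<dots> \<in> sets M"
    using T_sets by (intro sets.countable_UN sets.countable_INT) auto
  finally show ?thesis .
qed

lemma incl: "SD (T (Suc i)) A \<subseteq> (\<Union>j. SD (T (Suc (j + i))) (T (Suc (Suc (j + i)))))"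
proof
  fix x assume x: "x \<in> SD (T (Suc i)) A"
  have xO: "x \<in> \<Omega>" using x by (auto simp: SD_def A_def T_def)
  show "x \<in> (\<Union>j. SD (T (Suc (j + i))) (T (Suc (Suc (j + i)))))"
  proof (rule ccontr)
    assume "\<not> ?thesis"
    then have st: "x \<in> T (Suc (j + i)) \<longleftrightarrow> x \<in> T (Suc (Suc (j + i)))" for j
      by (auto simp: SD_def)
    have c: "x \<in> T (Suc (j + i)) \<longleftrightarrow> x \<in> T (Suc i)" for j
    proof (induction j)
      case 0 then show ?case by simp
    next
      case (Suc j)
      have "x \<in> T (Suc (Suc j + i)) \<longleftrightarrow> x \<in> T (Suc (Suc (j + i)))" by simp
      also have "\<dots> \<longleftrightarrow> x \<in> T (Suc (j + i))" using st[of j] by blast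
      also have "\<dots> \<longleftrightarrow> x \<in> T (Suc i)" using Suc.IH .
      finally show ?case .
    qed
    have c2: "x \<in> T n \<longleftrightarrow> x \<in> T (Suc i)" if "n \<ge> Suc i" for n
      using c[of "n - Suc i"] that by (simp add: Suc_diff_Suc)
    have "x \<in> A \<longleftrightarrow> x \<in> T (Suc i)"
    proof
      assume "x \<in> A"
      then obtain N where N: "\<forall>j\<ge>N. x \<in> T j" by (auto simp: A_def)
      then have "x \<in> T (max N (Suc i))" by simp
      then show "x \<in> T (Suc i)" using c2[of "max N (Suc i)"] by simp
    next
      assume "x \<in> T (Suc i)"
      then have "\<forall>j\<ge>Suc i. x \<in> T j" using c2 by blast
      then show "x \<in> A" using xO unfolding A_def by blast
    qed
    then show False using x by (auto simp: SD_def)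
  qed
qed

lemma chi_conv: "(\<lambda>k. l1_norm \<Omega> (\<lambda>x. chi (u k) x - indicator A x)) \<longlonglongrightarrow> 0"
proof -
  have eq: "l1_norm \<Omega> (\<lambda>x. chi (u k) x - indicator A x) = measure M (SD (T k) A)" for k
    by (rule l1_ind2[OF T_sets A_sets chi_T])
  have bnd: "measure M (SD (T (Suc i)) A) \<le> (\<Sum>j. m (j + i))" for i
  proof -
    have "measure M (SD (T (Suc i)) A) \<le> measure M (\<Union>j. SD (T (Suc (j + i))) (T (Suc (Suc (j + i)))))"
      using incl[of i] SD_sets[OF T_sets T_sets] by (intro fm.finite_measure_mono) auto
    also have "\<dots> \<le> (\<Sum>j. measure M (SD (T (Suc (j + i))) (T (Suc (Suc (j + i))))))"
    proof (rule fm.finite_measure_subadditive_countably)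
      show "range (\<lambda>j. SD (T (Suc (j + i))) (T (Suc (Suc (j + i))))) \<subseteq> sets M"
        using SD_sets[OF T_sets T_sets] by auto
      show "summable (\<lambda>j. measure M (SD (T (Suc (j + i))) (T (Suc (Suc (j + i))))))"
        using summable_ignore_initial_segment[OF m_summable, of i] by (simp add: m_def)
    qed
    also have "\<dots> = (\<Sum>j. m (j + i))" by (simp add: m_def)
    finally show ?thesis .
  qed
  have tail: "(\<lambda>i. \<Sum>j. m (j + i)) \<longlonglongrightarrow> 0" using suminf_exist_split2[OF m_summable] .
  have "(\<lambda>i. measure M (SD (T (Suc i)) A)) \<longlonglongrightarrow> 0"
    by (rule tendsto_sandwich[OF _ _ tendsto_const tail]) (auto intro!: always_eventually simp: bnd)
  then have "(\<lambda>k. measure M (SD (T k) A)) \<longlonglongrightarrow> 0" by (rule LIMSEQ_imp_Suc)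
  then show ?thesis by (simp add: eq)
qed

lemma bounded_part:
  assumes "\<alpha> > 0 \<or> b < \<infinity>"
  shows "(\<exists>C. \<forall>k. l2_norm \<Omega> (u k) \<le> C) \<and> (\<exists>C. \<forall>k. l2_norm \<Omega> (gradf (u k)) \<le> C)"
proof -
  obtain c where c: "\<forall>v \<in> L2 \<Omega>. c \<le> f v" using f_below by blast
  have Fk: "F k \<le> F 0" for k using F_dec by (simp add: decseq_def)
  have gk: "gfun \<alpha> \<beta> \<Omega> (u k) \<le> F 0 - c" for k
    using Fk[of k] c uL2[of k] by (auto simp: F_def)
  have "\<exists>C. \<forall>k. (\<integral>x. (u k x)\<^sup>2 \<partial>M) \<le> C"
  proof (cases "\<alpha> > 0")
    case True
    have "(\<integral>x. (u k x)\<^sup>2 \<partial>M) \<le> 2 * (F 0 - c) / \<alpha>" for k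
    proof -
      have "\<alpha> / 2 * (\<integral>x. (u k x)\<^sup>2 \<partial>M) \<le> gfun \<alpha> \<beta> \<Omega> (u k)"
        using \<beta> by (simp add: gfun_def l2_norm_sq l0_norm_def)
      then have "\<alpha> / 2 * (\<integral>x. (u k x)\<^sup>2 \<partial>M) \<le> F 0 - c" using gk[of k] by linarith
      then show ?thesis using True by (simp add: field_simps)
    qed
    then show ?thesis by blast
  next
    case False
    then have "b < \<infinity>" using assms by simp
    then obtain r where r: "b = ereal r" using b by (cases b) auto
    have "(\<integral>x. (u k x)\<^sup>2 \<partial>M) \<le> (\<integral>x. r\<^sup>2 \<partial>M)" for k
    proof (rule integral_mono_AE)
      show "integrable M (\<lambda>x. (u k x)\<^sup>2)" using L2_int[OF uL2] .
      show "integrable M (\<lambda>x. r\<^sup>2)" by simp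
      have "AE x in M. ereal \<bar>u k x\<bar> \<le> b" using uUad[of k] by (simp add: Uad_def)
      then show "AE x in M. (u k x)\<^sup>2 \<le> r\<^sup>2"
      proof eventually_elim
        case (elim x)
        then have "\<bar>u k x\<bar> \<le> r" using r by simp
        then have "\<bar>u k x\<bar>\<^sup>2 \<le> \<bar>r\<bar>\<^sup>2" by (intro power_mono) auto
        then show ?case by simp
      qed
    qed
    then show ?thesis by blast
  qed
  then obtain C where C: "\<And>k. (\<integral>x. (u k x)\<^sup>2 \<partial>M) \<le> C" by blast
  have ub: "l2_norm \<Omega> (u k) \<le> sqrt C" for k
    unfolding l2_norm_def using C[of k] by (rule real_sqrt_le_mono)
  have "l2_norm \<Omega> (gradf (u k)) \<le> l2_norm \<Omega> (gradf (u 0)) + Lf * (sqrt C + sqrt C)" for k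
  proof -
    have g0: "gradf (u 0) \<in> L2 \<Omega>" using GL2[OF uL2] .
    have gk: "gradf (u k) \<in> L2 \<Omega>" using GL2[OF uL2] .
    have "gradf (u k) = (\<lambda>x. gradf (u 0) x + (gradf (u k) x - gradf (u 0) x))" by simp
    then have "l2_norm \<Omega> (gradf (u k)) \<le> l2_norm \<Omega> (gradf (u 0)) + l2_norm \<Omega> (\<lambda>x. gradf (u k) x - gradf (u 0) x)"
      using minkowski[OF g0 L2_diff[OF gk g0]] by simp
    also have "l2_norm \<Omega> (\<lambda>x. gradf (u k) x - gradf (u 0) x) \<le> Lf * l2_norm \<Omega> (\<lambda>x. u k x - u 0 x)"
      using grad_lip[OF uL2 uL2] .
    also have "l2_norm \<Omega> (\<lambda>x. u k x - u 0 x) \<le> l2_norm \<Omega> (u k) + l2_norm \<Omega> (\<lambda>x. (-1) * u 0 x)"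
      using minkowski[OF uL2 L2_scale[OF uL2, of "-1"]] by simp
    also have "\<dots> \<le> sqrt C + sqrt C"
      using ub[of k] ub[of 0] by (simp add: l2_norm_neg)
    finally show ?thesis using Lf by (simp add: mult_left_mono)
  qed
  then show ?thesis using ub by blast
qed

end


theorem mainTheorem8:
  fixes \<Omega> :: "'a::euclidean_space set"
    and \<alpha> \<beta> L Lf :: real and b :: ereal
    and f :: "('a \<Rightarrow> real) \<Rightarrow> real"
    and gradf :: "('a \<Rightarrow> real) \<Rightarrow> ('a \<Rightarrow> real)"
    and u :: "nat \<Rightarrow> 'a \<Rightarrow> real"
  assumes \<Omega>_open: "open \<Omega>" and \<Omega>_bounded: "bounded \<Omega>"
    and \<alpha>: "\<alpha> \<ge> 0" and \<beta>: "\<beta> > 0" and b: "b > 0"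
    and f_ae: "\<And>v w. v \<in> L2 \<Omega> \<Longrightarrow> w \<in> L2 \<Omega> \<Longrightarrow>
                 (AE x in lebesgue_on \<Omega>. v x = w x) \<Longrightarrow> f v = f w"
    and f_wlsc: "weakly_lsc \<Omega> f"
    and f_below: "\<exists>c. \<forall>v \<in> L2 \<Omega>. c \<le> f v"
    and f_grad: "frechet_gradient \<Omega> f gradf"
    and Lf: "Lf \<ge> 0"
    and grad_lip: "\<And>v w. v \<in> L2 \<Omega> \<Longrightarrow> w \<in> L2 \<Omega> \<Longrightarrow>
        l2_norm \<Omega> (\<lambda>x. gradf v x - gradf w x) \<le> Lf * l2_norm \<Omega> (\<lambda>x. v x - w x)"
    and L: "L > Lf"
    and u0: "u 0 \<in> Uad \<Omega> b"
    and iht: "\<And>k. u (Suc k) \<in> Uad \<Omega> b \<and>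
        (\<forall>v \<in> Uad \<Omega> b. iht_model \<alpha> \<beta> \<Omega> f gradf L (u k) (u (Suc k))
                          \<le> iht_model \<alpha> \<beta> \<Omega> f gradf L (u k) v)"
  shows "((\<alpha> > 0 \<or> b < \<infinity>) \<longrightarrow>
            (\<exists>C. \<forall>k. l2_norm \<Omega> (u k) \<le> C) \<and> (\<exists>C. \<forall>k. l2_norm \<Omega> (gradf (u k)) \<le> C))
       \<and> decseq (\<lambda>k. f (u k) + gfun \<alpha> \<beta> \<Omega> (u k))
       \<and> convergent (\<lambda>k. f (u k) + gfun \<alpha> \<beta> \<Omega> (u k))
       \<and> (\<lambda>k. l2_norm \<Omega> (\<lambda>x. u (Suc k) x - u k x)) \<longlonglongrightarrow> 0
       \<and> summable (\<lambda>k. l1_norm \<Omega> (\<lambda>x. chi (u (Suc k)) x - chi (u (Suc (Suc k))) x))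
       \<and> (\<exists>A \<in> sets (lebesgue_on \<Omega>).
            (\<lambda>k. l1_norm \<Omega> (\<lambda>x. chi (u k) x - indicator A x)) \<longlonglongrightarrow> 0)"
proof -
  have Om: "\<Omega> \<in> lmeasurable" using lmeasurable_open[OF \<Omega>_bounded \<Omega>_open] .
  interpret I: iht \<Omega> \<alpha> \<beta> L Lf b f gradf u
    by (rule iht.intro[OF dom.intro[OF Om] iht_axioms.intro[OF \<alpha> \<beta> b f_below f_grad Lf grad_lip L u0 iht]])
  have Feq: "I.F = (\<lambda>k. f (u k) + gfun \<alpha> \<beta> \<Omega> (u k))" by (simp add: I.F_def fun_eq_iff)
  have c1: "(\<alpha> > 0 \<or> b < \<infinity>) \<longrightarrow>
            (\<exists>C. \<forall>k. l2_norm \<Omega> (u k) \<le> C) \<and> (\<exists>C. \<forall>k. l2_norm \<Omega> (gradf (u k)) \<le> C)"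
    using I.bounded_part by blast
  have c2: "decseq (\<lambda>k. f (u k) + gfun \<alpha> \<beta> \<Omega> (u k))" using I.F_dec by (simp add: Feq)
  have c3: "convergent (\<lambda>k. f (u k) + gfun \<alpha> \<beta> \<Omega> (u k))"
    using I.F_conv by (simp add: Feq convergent_def)
  have c5: "summable (\<lambda>k. l1_norm \<Omega> (\<lambda>x. chi (u (Suc k)) x - chi (u (Suc (Suc k))) x))"
    using I.m_summable by (simp add: I.l1_m)
  show ?thesis
    using c1 c2 c3 I.step_to_zero c5 I.chi_conv I.A_sets by blast
qed

end
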